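(* Let $d\ge2$, $(S,\mathfrak n,\mathbf k)$ a complete regular local ring with $\mathbf k$ algebraically closed of characteristic not dividing $d$, $0\ne f\in\mathfrak n^2$, and $R^\sharp=S[[z]]/(f+z^d)$; assume $f+z^d$ is irreducible. Let $N$ be a maximal Cohen-Macaulay $R^\sharp$-module and $X\in\mathrm{MF}_S^d(f)$. Then $\mu_{R^\sharp}(N)=\operatorname{rank}_S(N)$ if and only if $N^\flat$ is reduced, and $\mu_{R^\sharp}(X^\sharp)=\operatorname{rank}_S(X^\sharp)$ if and only if $X$ is reduced.
   Context: $\mathrm{MF}_S^d(f)$ is the category of matrix factorizations of $f$ with $d$ factors: $X=(\phi_1:F_2\to F_1,\dots,\phi_d:F_1\to F_d)$ with $F_i$ finitely generated free $S$-modules of equal rank and $\phi_1\cdots\phi_d=f\cdot1_{F_1}$. $X$ is reduced if $\mathrm{Im}\,\phi_k\subseteq\mathfrak nF_k$ for all $k$. A maximal Cohen-Macaulay $R^\sharp$-module is a finitely generated $R^\sharp$-module free over $S$; $\mu_{R^\sharp}$ denotes minimal number of generators. Fix $\mu\in S$ with $\mu^d=-1$. For such $N$ with $\phi:N\to N$ multiplication by $z$, $N^\flat=(\mu\phi,\dots,\mu\phi)$. For $X=(\phi_1,\dots,\phi_d)$, $X^\sharp$ is the $S$-module $F_d\oplus\cdots\oplus F_1$ with $z\cdot(x_d,x_{d-1},\dots,x_1)=(\mu^{-1}\phi_d(x_1),\mu^{-1}\phi_{d-1}(x_d),\dots,\mu^{-1}\phi_1(x_2))$. *)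

theory Defs
  imports "Jordan_Normal_Form.Matrix" "HOL-Computational_Algebra.Formal_Power_Series"
    "HOL-Computational_Algebra.Polynomial" "HOL-Computational_Algebra.Factorial_Ring"
    "HOL-Library.Extended_Nat"
begin

definition is_ideal :: "'a::comm_ring_1 set \<Rightarrow> bool" where
  "is_ideal I \<longleftrightarrow> 0 \<in> I \<and> (\<forall>x\<in>I. \<forall>y\<in>I. x + y \<in> I) \<and> (\<forall>r x. x \<in> I \<longrightarrow> r * x \<in> I)"

definition maximal_ideal :: "'a::comm_ring_1 set \<Rightarrow> bool" where
  "maximal_ideal I \<longleftrightarrow> is_ideal I \<and> I \<noteq> UNIV \<and>
     (\<forall>J. is_ideal J \<and> I \<subseteq> J \<longrightarrow> J = I \<or> J = UNIV)"

definition prime_ideal :: "'a::comm_ring_1 set \<Rightarrow> bool" where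
  "prime_ideal P \<longleftrightarrow> is_ideal P \<and> P \<noteq> UNIV \<and> (\<forall>a b. a * b \<in> P \<longrightarrow> a \<in> P \<or> b \<in> P)"

definition ideal_gen :: "'a::comm_ring_1 set \<Rightarrow> 'a set" where
  "ideal_gen G = {x. \<exists>c. x = (\<Sum>g\<in>G. c g * g)}"

definition noetherian_ring :: "'a::comm_ring_1 itself \<Rightarrow> bool" where
  "noetherian_ring _ \<longleftrightarrow> (\<forall>I::'a set. is_ideal I \<longrightarrow> (\<exists>G. finite G \<and> G \<subseteq> I \<and> I = ideal_gen G))"

definition local_ring :: "'a::comm_ring_1 itself \<Rightarrow> bool" where
  "local_ring _ \<longleftrightarrow> (\<exists>!m::'a set. maximal_ideal m)"

definition max_ideal :: "'a::comm_ring_1 set" where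
  "max_ideal = (THE m. maximal_ideal m)"

definition ideal_prod_set :: "'a::comm_ring_1 set \<Rightarrow> 'a set \<Rightarrow> 'a set" where
  "ideal_prod_set I J = {x. \<exists>(m::nat) a b. (\<forall>i<m. a i \<in> I \<and> b i \<in> J) \<and> x = (\<Sum>i<m. a i * b i)}"

fun ideal_pow :: "'a::comm_ring_1 set \<Rightarrow> nat \<Rightarrow> 'a set" where
  "ideal_pow I 0 = UNIV"
| "ideal_pow I (Suc k) = ideal_prod_set I (ideal_pow I k)"

definition krull_dim :: "'a::comm_ring_1 itself \<Rightarrow> enat" where
  "krull_dim _ = Sup {enat m | m. \<exists>P::nat \<Rightarrow> 'a set.
       (\<forall>i\<le>m. prime_ideal (P i)) \<and> (\<forall>i<m. P i \<subset> P (Suc i))}"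

definition regular_local_ring :: "'a::comm_ring_1 itself \<Rightarrow> bool" where
  "regular_local_ring T \<longleftrightarrow> noetherian_ring T \<and> local_ring T \<and>
     (\<exists>G::'a set. finite G \<and> max_ideal = ideal_gen G \<and> enat (card G) = krull_dim T)"

definition complete_local_ring :: "'a::comm_ring_1 itself \<Rightarrow> bool" where
  "complete_local_ring T \<longleftrightarrow> local_ring T \<and>
     (\<Inter>k. ideal_pow (max_ideal::'a set) k) = {0} \<and>
     (\<forall>x::nat \<Rightarrow> 'a. (\<forall>k. \<exists>N. \<forall>m\<ge>N. x m - x N \<in> ideal_pow max_ideal k) \<longrightarrow>
        (\<exists>y. \<forall>k. \<exists>N. \<forall>m\<ge>N. x m - y \<in> ideal_pow max_ideal k))"

text \<open>The residue field \<open>S/\<frak>n\<close> is algebraically closed: every polynomial over S whose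
  reduction modulo \<open>\<frak>n\<close> is nonconstant (of the same degree) has a root modulo \<open>\<frak>n\<close>.\<close>
definition residue_field_alg_closed :: "'a::comm_ring_1 itself \<Rightarrow> bool" where
  "residue_field_alg_closed _ \<longleftrightarrow> (\<forall>p::'a poly. degree p \<ge> 1 \<and> lead_coeff p \<notin> max_ideal \<longrightarrow>
       (\<exists>a. poly p a \<in> max_ideal))"

definition max_ideal_vecs :: "nat \<Rightarrow> 'a::comm_ring_1 vec set" where
  "max_ideal_vecs r = {w \<in> carrier_vec r. \<forall>i<r. w $ i \<in> max_ideal}"

text \<open>A maximal Cohen-Macaulay \<open>R\<^sup>\<sharp>\<close>-module is a free S-module \<open>S^r\<close> together with the
  action of z, an \<open>r\<times>r\<close> matrix A with \<open>A^d = -f\<close>.\<close>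
definition zspan :: "nat \<Rightarrow> 'a::comm_ring_1 mat \<Rightarrow> 'a vec set \<Rightarrow> 'a vec set" where
  "zspan r A G = {w \<in> carrier_vec r. \<exists>c m. \<forall>i<r.
      w $ i = (\<Sum>g\<in>G. \<Sum>k<m. c g k * ((A ^\<^sub>m k) *\<^sub>v g) $ i)}"

definition mu_gen :: "nat \<Rightarrow> 'a::comm_ring_1 mat \<Rightarrow> nat" where
  "mu_gen r A = (LEAST k. \<exists>G. finite G \<and> card G = k \<and> G \<subseteq> carrier_vec r \<and>
                    zspan r A G = carrier_vec r)"

fun mf_prod :: "nat \<Rightarrow> (nat \<Rightarrow> 'a::comm_ring_1 mat) \<Rightarrow> nat \<Rightarrow> 'a mat" where
  "mf_prod n phi 0 = 1\<^sub>m n"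
| "mf_prod n phi (Suc k) = mf_prod n phi k * phi (Suc k)"

text \<open>\<open>X = (\<phi>\<^sub>1,\<dots>,\<phi>\<^sub>d) \<in> MF\<^sub>S\<^sup>d(f)\<close> with all \<open>F\<^sub>i = S^n\<close>; indices 1..d.\<close>
definition is_mf :: "nat \<Rightarrow> 'a::comm_ring_1 \<Rightarrow> nat \<Rightarrow> (nat \<Rightarrow> 'a mat) \<Rightarrow> bool" where
  "is_mf d f n phi \<longleftrightarrow> (\<forall>k\<in>{1..d}. phi k \<in> carrier_mat n n) \<and> mf_prod n phi d = f \<cdot>\<^sub>m 1\<^sub>m n"

definition reduced_mf :: "nat \<Rightarrow> nat \<Rightarrow> (nat \<Rightarrow> 'a::comm_ring_1 mat) \<Rightarrow> bool" where
  "reduced_mf d n phi \<longleftrightarrow> (\<forall>k\<in>{1..d}. \<forall>v\<in>carrier_vec n. phi k *\<^sub>v v \<in> max_ideal_vecs n)"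

definition flat_mf :: "'a::comm_ring_1 \<Rightarrow> 'a mat \<Rightarrow> nat \<Rightarrow> 'a mat" where
  "flat_mf mu A = (\<lambda>_. mu \<cdot>\<^sub>m A)"

text \<open>\<open>X\<^sup>\<sharp>\<close>: the module \<open>F\<^sub>d \<oplus> \<cdots> \<oplus> F\<^sub>1 = S^(d n)\<close> (block j holds \<open>x\<^sub>d\<^sub>-\<^sub>j\<close>) with z acting by
  \<open>z(x\<^sub>d,\<dots>,x\<^sub>1) = (\<mu>\<^sup>-\<^sup>1\<phi>\<^sub>d(x\<^sub>1), \<mu>\<^sup>-\<^sup>1\<phi>\<^sub>d\<^sub>-\<^sub>1(x\<^sub>d), \<dots>, \<mu>\<^sup>-\<^sup>1\<phi>\<^sub>1(x\<^sub>2))\<close>.\<close>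
definition sharp_mat :: "nat \<Rightarrow> 'a::comm_ring_1 \<Rightarrow> nat \<Rightarrow> (nat \<Rightarrow> 'a mat) \<Rightarrow> 'a mat" where
  "sharp_mat d mu n phi = mat (d * n) (d * n) (\<lambda>(i, j).
     (let bi = i div n; ri = i mod n; bj = j div n; cj = j mod n; nu = (THE nu. mu * nu = 1) in
      if bi = 0 \<and> bj = d - 1 then nu * (phi d $$ (ri, cj))
      else if bi \<ge> 1 \<and> bj = bi - 1 then nu * (phi (d - bi) $$ (ri, cj))
      else 0))"

end

theory Submission
  imports Defs "Jordan_Normal_Form.Determinant"
begin


lemma maxI_props:
  assumes "local_ring TYPE('a::comm_ring_1)"
  shows "maximal_ideal (max_ideal :: 'a set)"
proof -
  from assms have "\<exists>!m::'a set. maximal_ideal m" by (simp add: local_ring_def)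
  then show ?thesis unfolding max_ideal_def by (rule theI')
qed

lemma ideal_add: "is_ideal I \<Longrightarrow> x \<in> I \<Longrightarrow> y \<in> I \<Longrightarrow> x + y \<in> I"
  by (simp add: is_ideal_def)
lemma ideal_mult: "is_ideal I \<Longrightarrow> x \<in> I \<Longrightarrow> r * x \<in> I"
  by (simp add: is_ideal_def)
lemma ideal_mult2: "is_ideal I \<Longrightarrow> x \<in> I \<Longrightarrow> x * r \<in> I"
  by (simp add: is_ideal_def mult.commute)
lemma ideal_zero: "is_ideal I \<Longrightarrow> 0 \<in> I"
  by (simp add: is_ideal_def)
lemma ideal_uminus: "is_ideal I \<Longrightarrow> x \<in> I \<Longrightarrow> - x \<in> I"
  using ideal_mult[of I x "-1"] by simp
lemma ideal_diff: "is_ideal I \<Longrightarrow> x \<in> I \<Longrightarrow> y \<in> I \<Longrightarrow> x - y \<in> I"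
  using ideal_add[of I x "-y"] ideal_uminus[of I y] by simp
lemma ideal_sum: "is_ideal I \<Longrightarrow> (\<And>i. i \<in> S \<Longrightarrow> g i \<in> I) \<Longrightarrow> sum g S \<in> I"
  by (induction S rule: infinite_finite_induct) (auto simp: ideal_zero ideal_add)
lemma ideal_one: "is_ideal I \<Longrightarrow> I \<noteq> UNIV \<Longrightarrow> (1::'a::comm_ring_1) \<notin> I"
  using ideal_mult[of I 1] by auto

lemma nonunit_in_max:
  assumes loc: "local_ring TYPE('a::comm_ring_1)" and nu: "\<not> (\<exists>b. a * b = (1::'a))"
  shows "a \<in> max_ideal"
proof -
  define I where "I = {r * a | r. True}"
  have Iid: "is_ideal I" unfolding I_def is_ideal_def
  proof (intro conjI ballI allI impI)
    show "0 \<in> {r * a |r. True}" by (rule CollectI, rule exI[of _ 0]) simp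
  next
    fix x y assume "x \<in> {r * a |r. True}" "y \<in> {r * a |r. True}"
    then obtain r s where "x = r * a" "y = s * a" by blast
    then have "x + y = (r + s) * a" by (simp add: distrib_right)
    then show "x + y \<in> {r * a |r. True}" by blast
  next
    fix t x assume "x \<in> {r * a |r. True}"
    then obtain r where "x = r * a" by blast
    then have "t * x = (t * r) * a" by (simp add: mult.assoc)
    then show "t * x \<in> {r * a |r. True}" by blast
  qed
  have one: "1 \<notin> I" using nu unfolding I_def by (auto simp: mult.commute)
  define \<A> where "\<A> = {J. is_ideal J \<and> 1 \<notin> J \<and> I \<subseteq> J}"
  have "\<forall>C\<in>chains \<A>. \<exists>U\<in>\<A>. \<forall>X\<in>C. X \<subseteq> U"
  proof
    fix C assume C: "C \<in> chains \<A>"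
    show "\<exists>U\<in>\<A>. \<forall>X\<in>C. X \<subseteq> U"
    proof (cases "C = {}")
      case True then show ?thesis using Iid one unfolding \<A>_def by auto
    next
      case False
      have sub: "C \<subseteq> \<A>" and ch: "\<forall>X\<in>C. \<forall>Y\<in>C. X \<subseteq> Y \<or> Y \<subseteq> X"
        using C unfolding chains_def chain_subset_def by auto
      have "is_ideal (\<Union>C)" unfolding is_ideal_def
      proof (intro conjI ballI allI impI)
        from False obtain X where X: "X \<in> C" by blast
        then have "is_ideal X" using sub unfolding \<A>_def by auto
        then show "0 \<in> \<Union>C" using X ideal_zero by blast
      next
        fix x y assume "x \<in> \<Union>C" "y \<in> \<Union>C"
        then obtain X Y where XY: "X \<in> C" "Y \<in> C" "x \<in> X" "y \<in> Y" by auto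
        from ch XY have "X \<subseteq> Y \<or> Y \<subseteq> X" by auto
        then show "x + y \<in> \<Union>C" using XY sub unfolding \<A>_def
          by (auto intro: ideal_add)
      next
        fix r x assume "x \<in> \<Union>C"
        then show "r * x \<in> \<Union>C" using sub unfolding \<A>_def by (auto intro: ideal_mult)
      qed
      moreover have "1 \<notin> \<Union>C" "I \<subseteq> \<Union>C" using sub False unfolding \<A>_def by auto
      ultimately show ?thesis unfolding \<A>_def by auto
    qed
  qed
  from Zorn_Lemma2[OF this] obtain M where M: "M \<in> \<A>" and Mmax: "\<forall>X\<in>\<A>. M \<subseteq> X \<longrightarrow> X = M"
    by blast
  have "maximal_ideal M" unfolding maximal_ideal_def
  proof (intro conjI allI impI)
    show "is_ideal M" "M \<noteq> UNIV" using M unfolding \<A>_def by auto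
  next
    fix J assume J: "is_ideal J \<and> M \<subseteq> J"
    show "J = M \<or> J = UNIV"
    proof (cases "1 \<in> J")
      case True
      then have "J = UNIV" using J ideal_mult[of J 1] by auto
      then show ?thesis by simp
    next
      case False
      then have "J \<in> \<A>" using J M unfolding \<A>_def by auto
      then show ?thesis using Mmax J by auto
    qed
  qed
  moreover have "maximal_ideal (max_ideal::'a set)" by (rule maxI_props[OF loc])
  moreover from loc have "\<exists>!m::'a set. maximal_ideal m" by (simp add: local_ring_def)
  ultimately have "M = max_ideal" by blast
  moreover have "a \<in> M" using M unfolding \<A>_def I_def by (auto intro: exI[of _ 1])
  ultimately show ?thesis by simp
qed


lemma max_ideal_basic:
  assumes "local_ring TYPE('a::comm_ring_1)"
  shows "is_ideal (max_ideal::'a set)" "(1::'a) \<notin> max_ideal"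
  using maxI_props[OF assms] unfolding maximal_ideal_def using ideal_one by auto

lemma unit_of_notin:
  assumes "local_ring TYPE('a::comm_ring_1)" "(a::'a) \<notin> max_ideal"
  shows "\<exists>b. a * b = 1"
  using nonunit_in_max[OF assms(1)] assms(2) by blast

lemma unit_notin:
  assumes "local_ring TYPE('a::comm_ring_1)" "(a::'a) * b = 1"
  shows "a \<notin> max_ideal"
proof
  assume "a \<in> max_ideal"
  then have "a * b \<in> max_ideal" using ideal_mult2 max_ideal_basic[OF assms(1)] by blast
  then show False using assms max_ideal_basic(2)[OF assms(1)] by simp
qed

lemma unit_mult_in:
  assumes "local_ring TYPE('a::comm_ring_1)" "(a::'a) * b = 1"
  shows "a * x \<in> max_ideal \<longleftrightarrow> x \<in> max_ideal"
proof
  assume "a * x \<in> max_ideal"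
  then have "b * (a * x) \<in> max_ideal" using ideal_mult max_ideal_basic[OF assms(1)] by blast
  moreover have "b * (a * x) = x" using assms(2) by (metis mult.assoc mult.commute mult_1)
  ultimately show "x \<in> max_ideal" by simp
next
  assume "x \<in> max_ideal"
  then show "a * x \<in> max_ideal" using ideal_mult max_ideal_basic[OF assms(1)] by blast
qed

lemma prod_cong_ideal:
  assumes I: "is_ideal I" and "finite S" and "\<And>i. i \<in> S \<Longrightarrow> f i - g i \<in> I"
  shows "prod f S - prod g S \<in> I"
  using assms(2,3)
proof (induction S rule: finite_induct)
  case empty then show ?case using ideal_zero[OF I] by simp
next
  case (insert a F)
  have e: "prod f (insert a F) - prod g (insert a F) = (f a - g a) * prod f F + g a * (prod f F - prod g F)"
    using insert(1,2) by (simp add: algebra_simps)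
  have "(f a - g a) * prod f F \<in> I" using insert ideal_mult2[OF I] by blast
  moreover have "g a * (prod f F - prod g F) \<in> I" using insert ideal_mult[OF I] by blast
  ultimately show ?case unfolding e using ideal_add[OF I] by blast
qed

lemma sum_cong_ideal:
  assumes I: "is_ideal I" and "\<And>i. i \<in> S \<Longrightarrow> f i - g i \<in> I"
  shows "sum f S - sum g S \<in> I"
proof -
  have "sum f S - sum g S = sum (\<lambda>i. f i - g i) S" by (simp add: sum_subtractf)
  then show ?thesis using ideal_sum[OF I, of S "\<lambda>i. f i - g i"] assms(2) by simp
qed

lemma det_cong_ideal:
  assumes I: "is_ideal I" and M: "M \<in> carrier_mat n n" and M': "M' \<in> carrier_mat n n"
    and c: "\<And>i j. i < n \<Longrightarrow> j < n \<Longrightarrow> M $$ (i,j) - M' $$ (i,j) \<in> I"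
  shows "det M - det M' \<in> I"
proof -
  have "(\<Sum> p \<in> {p. p permutes {0 ..< n}}. signof p * (\<Prod> i = 0 ..< n. M $$ (i, p i)))
      - (\<Sum> p \<in> {p. p permutes {0 ..< n}}. signof p * (\<Prod> i = 0 ..< n. M' $$ (i, p i))) \<in> I"
  proof (rule sum_cong_ideal[OF I])
    fix p assume "p \<in> {p. p permutes {0 ..< n}}"
    then have pp: "p permutes {0..<n}" by simp
    have "(\<Prod> i = 0 ..< n. M $$ (i, p i)) - (\<Prod> i = 0 ..< n. M' $$ (i, p i)) \<in> I"
      by (rule prod_cong_ideal[OF I]) (use pp c permutes_in_image in auto)
    then have "signof p * ((\<Prod> i = 0 ..< n. M $$ (i, p i)) - (\<Prod> i = 0 ..< n. M' $$ (i, p i))) \<in> I"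
      using ideal_mult[OF I] by blast
    then show "signof p * (\<Prod> i = 0 ..< n. M $$ (i, p i)) - signof p * (\<Prod> i = 0 ..< n. M' $$ (i, p i)) \<in> I"
      by (simp add: right_diff_distrib)
  qed
  then show ?thesis using det_def'[OF M] det_def'[OF M'] by simp
qed

lemma det_zero_row_gen:
  assumes M: "(M::'a::comm_ring_1 mat) \<in> carrier_mat n n" and k: "k < n" and z: "\<And>j. j < n \<Longrightarrow> M $$ (k,j) = 0"
  shows "det M = 0"
proof -
  have "\<And>p. p permutes {0..<n} \<Longrightarrow> (\<Prod> i = 0 ..< n. M $$ (i, p i)) = 0"
  proof -
    fix p assume "p permutes {0..<n}"
    then have "p k < n" using k permutes_in_image by fastforce
    then have "M $$ (k, p k) = 0" using z by simp
    then show "(\<Prod> i = 0 ..< n. M $$ (i, p i)) = 0" using k by (intro prod_zero) auto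
  qed
  then show ?thesis using det_def'[OF M] by simp
qed

lemma mult_entry:
  assumes "A \<in> carrier_mat n m" "B \<in> carrier_mat m k" "i < n" "j < k"
  shows "(A * B) $$ (i,j) = (\<Sum>l<m. A $$ (i,l) * B $$ (l,j))"
  using assms by (simp add: scalar_prod_def lessThan_atLeast0 row_def col_def)

lemma mult_vec_entry:
  assumes "A \<in> carrier_mat n m" "v \<in> carrier_vec m" "i < n"
  shows "(A *\<^sub>v v) $ i = (\<Sum>l<m. A $$ (i,l) * v $ l)"
  using assms by (simp add: scalar_prod_def lessThan_atLeast0 row_def)

lemma pow_entries_in:
  assumes I: "is_ideal I" and B: "B \<in> carrier_mat m m"
    and e: "\<And>i j. i < m \<Longrightarrow> j < m \<Longrightarrow> B $$ (i,j) \<in> I"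
  shows "k \<ge> 1 \<Longrightarrow> i < m \<Longrightarrow> j < m \<Longrightarrow> (B ^\<^sub>m k) $$ (i,j) \<in> I"
proof (induction k arbitrary: i j)
  case 0 then show ?case by simp
next
  case (Suc k)
  have Bk: "B ^\<^sub>m k \<in> carrier_mat m m" using B by simp
  have "(B ^\<^sub>m Suc k) $$ (i,j) = (\<Sum>l<m. (B ^\<^sub>m k) $$ (i,l) * B $$ (l,j))"
    using mult_entry[OF Bk B Suc(3,4)] by simp
  also have "\<dots> \<in> I" by (intro ideal_sum[OF I] ideal_mult[OF I] e Suc(4)) auto
  finally show ?case .
qed

lemma sum_first_cong:
  fixes X :: "nat \<Rightarrow> 'a::comm_ring_1"
  assumes I: "is_ideal I" and X: "\<And>k. k \<ge> 1 \<Longrightarrow> X k \<in> I"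
  shows "(\<Sum>k<mm. X k) - (if 0 < mm then X 0 else 0) \<in> I"
proof (induction mm)
  case 0 then show ?case using ideal_zero[OF I] by simp
next
  case (Suc mm)
  show ?case
  proof (cases "mm = 0")
    case True then show ?thesis using ideal_zero[OF I] by simp
  next
    case False
    have "(\<Sum>k<Suc mm. X k) - (if 0 < Suc mm then X 0 else 0)
       = ((\<Sum>k<mm. X k) - (if 0 < mm then X 0 else 0)) + X mm" using False by simp
    moreover have "X mm \<in> I" using X False by simp
    ultimately show ?thesis using Suc ideal_add[OF I] by (metis (no_types, lifting))
  qed
qed


lemma gen_lower:
  assumes loc: "local_ring TYPE('a::comm_ring_1)"
    and B: "(B::'a mat) \<in> carrier_mat m m"
    and e: "\<And>i j. i < m \<Longrightarrow> j < m \<Longrightarrow> B $$ (i,j) \<in> max_ideal"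
    and G: "finite G" "G \<subseteq> carrier_vec m" and span: "zspan m B G = carrier_vec m"
  shows "m \<le> card G"
proof (rule ccontr)
  assume "\<not> m \<le> card G"
  then have sm: "card G < m" by simp
  define s where "s = card G"
  have I: "is_ideal (max_ideal::'a set)" and one: "(1::'a) \<notin> max_ideal"
    using max_ideal_basic[OF loc] by auto
  define PP where "PP i p = (\<forall>l<m. unit_vec m i $ l = (\<Sum>g\<in>G. \<Sum>k<snd p. fst p g k * ((B ^\<^sub>m k) *\<^sub>v g) $ l))" for i and p :: "('a vec \<Rightarrow> nat \<Rightarrow> 'a) \<times> nat"
  have ex: "\<exists>p. PP i p" if "i < m" for i
  proof -
    have "unit_vec m i \<in> zspan m B G" using span that by simp
    then obtain c mm where "\<forall>l<m. unit_vec m i $ l = (\<Sum>g\<in>G. \<Sum>k<mm. c g k * ((B ^\<^sub>m k) *\<^sub>v g) $ l)"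
      unfolding zspan_def by blast
    then have "PP i (c, mm)" unfolding PP_def by simp
    then show ?thesis by blast
  qed
  define c where "c i = fst (SOME p. PP i p)" for i
  define mm where "mm i = snd (SOME p. PP i p)" for i
  have cm: "unit_vec m i $ l = (\<Sum>g\<in>G. \<Sum>k<mm i. c i g k * ((B ^\<^sub>m k) *\<^sub>v g) $ l)"
    if "i < m" "l < m" for i l
  proof -
    have "PP i (SOME p. PP i p)" using someI_ex[OF ex[OF that(1)]] .
    then show ?thesis unfolding PP_def c_def mm_def using that(2) by blast
  qed
  define c' where "c' i g = (if 0 < mm i then c i g 0 else 0)" for i g
  have cong: "(\<Sum>g\<in>G. c' i g * g $ l) - (if l = i then 1 else 0) \<in> max_ideal"
    if il: "i < m" "l < m" for i l
  proof -
    have "(\<Sum>g\<in>G. \<Sum>k<mm i. c i g k * ((B ^\<^sub>m k) *\<^sub>v g) $ l) - (\<Sum>g\<in>G. c' i g * g $ l) \<in> max_ideal"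
    proof (rule sum_cong_ideal[OF I])
      fix g assume gG: "g \<in> G"
      then have gc: "g \<in> carrier_vec m" using G by auto
      have x: "c i g k * ((B ^\<^sub>m k) *\<^sub>v g) $ l \<in> max_ideal" if "k \<ge> 1" for k
      proof -
        have Bk: "B ^\<^sub>m k \<in> carrier_mat m m" using B by simp
        have "((B ^\<^sub>m k) *\<^sub>v g) $ l = (\<Sum>t<m. (B ^\<^sub>m k) $$ (l,t) * g $ t)"
          by (rule mult_vec_entry[OF Bk gc il(2)])
        also have "\<dots> \<in> max_ideal"
          by (intro ideal_sum[OF I] ideal_mult2[OF I] pow_entries_in[OF I B e] that il(2)) auto
        finally show ?thesis using ideal_mult[OF I] by blast
      qed
      have x0: "c i g 0 * ((B ^\<^sub>m 0) *\<^sub>v g) $ l = c i g 0 * g $ l"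
        using B gc by simp
      show "(\<Sum>k<mm i. c i g k * ((B ^\<^sub>m k) *\<^sub>v g) $ l) - c' i g * g $ l \<in> max_ideal"
        using sum_first_cong[OF I, of "\<lambda>k. c i g k * ((B ^\<^sub>m k) *\<^sub>v g) $ l" "mm i"] x x0
        unfolding c'_def by (auto split: if_splits)
    qed
    then have "unit_vec m i $ l - (\<Sum>g\<in>G. c' i g * g $ l) \<in> max_ideal" using cm il by simp
    then have "- (unit_vec m i $ l - (\<Sum>g\<in>G. c' i g * g $ l)) \<in> max_ideal" using ideal_uminus[OF I] by blast
    then show ?thesis using il by simp
  qed
  obtain en where en: "bij_betw en {0..<s} G"
    using ex_bij_betw_nat_finite[OF G(1)] unfolding s_def by blast
  define P where "P = mat m m (\<lambda>(l,p). if p < s then en p $ l else 0)"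
  define Q where "Q = mat m m (\<lambda>(p,i). if p < s then c' i (en p) else (0::'a))"
  have P: "P \<in> carrier_mat m m" and Q: "Q \<in> carrier_mat m m" unfolding P_def Q_def by auto
  have PQ: "(P * Q) $$ (l,i) = (\<Sum>g\<in>G. c' i g * g $ l)" if "l < m" "i < m" for l i
  proof -
    have "(P * Q) $$ (l,i) = (\<Sum>p<m. P $$ (l,p) * Q $$ (p,i))" by (rule mult_entry[OF P Q that])
    also have "\<dots> = (\<Sum>p<m. if p < s then en p $ l * c' i (en p) else 0)"
      unfolding P_def Q_def using that by (intro sum.cong) auto
    also have "\<dots> = (\<Sum>p\<in>{0..<s}. en p $ l * c' i (en p))"
    proof -
      have "{..<m} = {0..<s} \<union> {s..<m}" using sm s_def by auto
      then have "(\<Sum>p<m. if p < s then en p $ l * c' i (en p) else 0)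
         = (\<Sum>p\<in>{0..<s}. if p < s then en p $ l * c' i (en p) else 0)
         + (\<Sum>p\<in>{s..<m}. if p < s then en p $ l * c' i (en p) else 0)"
        by (simp add: sum.union_disjoint)
      then show ?thesis by simp
    qed
    also have "\<dots> = (\<Sum>g\<in>G. g $ l * c' i g)"
      by (rule sum.reindex_bij_betw[OF en])
    finally show ?thesis by (simp add: mult.commute)
  qed
  have "det (P * Q) - det (1\<^sub>m m) \<in> max_ideal"
  proof (rule det_cong_ideal[OF I])
    show "P * Q \<in> carrier_mat m m" using P Q by simp
    show "1\<^sub>m m \<in> carrier_mat m m" by simp
    fix l i assume "l < m" "i < m"
    then show "(P * Q) $$ (l,i) - 1\<^sub>m m $$ (l,i) \<in> max_ideal"
      using PQ cong by simp
  qed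
  moreover have "det Q = 0"
    by (rule det_zero_row_gen[OF Q, of s]) (use sm s_def in \<open>auto simp: Q_def\<close>)
  ultimately have "0 - 1 \<in> (max_ideal::'a set)" using det_mult[OF P Q] by simp
  then have "- (0 - 1) \<in> (max_ideal::'a set)" using ideal_uminus[OF I] by blast
  then show False using one by simp
qed


lemma unit_mult_vec:
  assumes "(B::'a::comm_ring_1 mat) \<in> carrier_mat m m" "k < m" "l < m"
  shows "(B *\<^sub>v unit_vec m k) $ l = B $$ (l,k)"
proof -
  have "(B *\<^sub>v unit_vec m k) $ l = (\<Sum>t<m. B $$ (l,t) * unit_vec m k $ t)"
    using mult_vec_entry[OF assms(1) _ assms(3)] by simp
  also have "\<dots> = (\<Sum>t<m. if t = k then B $$ (l,t) else 0)"
    using assms(2) by (intro sum.cong) auto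
  also have "\<dots> = B $$ (l,k)" using assms(2) by simp
  finally show ?thesis .
qed

lemma inj_unit_vec: "inj_on (unit_vec m :: nat \<Rightarrow> 'a::zero_neq_one vec) {0..<m}"
proof
  fix x y assume "x \<in> {0..<m}" "y \<in> {0..<m}" "(unit_vec m x :: 'a vec) = unit_vec m y"
  then have "(unit_vec m x :: 'a vec) $ x = unit_vec m y $ x" by simp
  then show "x = y" using \<open>x \<in> {0..<m}\<close> \<open>y \<in> {0..<m}\<close> by (auto split: if_splits)
qed

lemma std_span:
  assumes B: "(B::'a::comm_ring_1 mat) \<in> carrier_mat m m"
  shows "zspan m B (unit_vec m ` {0..<m}) = carrier_vec m"
proof
  show "zspan m B (unit_vec m ` {0..<m}) \<subseteq> carrier_vec m" unfolding zspan_def by auto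
next
  show "carrier_vec m \<subseteq> zspan m B (unit_vec m ` {0..<m})"
  proof
    fix w :: "'a vec" assume w: "w \<in> carrier_vec m"
    define ix where "ix = inv_into {0..<m} (unit_vec m :: nat \<Rightarrow> 'a vec)"
    have ix: "ix (unit_vec m k) = k" if "k < m" for k
      unfolding ix_def using inv_into_f_f[OF inj_unit_vec] that by simp
    define c where "c g (k::nat) = w $ ix g" for g k
    have "\<forall>l<m. w $ l = (\<Sum>g\<in>unit_vec m ` {0..<m}. \<Sum>k<1. c g k * ((B ^\<^sub>m k) *\<^sub>v g) $ l)"
    proof (intro allI impI)
      fix l assume l: "l < m"
      have "(\<Sum>g\<in>unit_vec m ` {0..<m}. \<Sum>k<1. c g k * ((B ^\<^sub>m k) *\<^sub>v g) $ l)
          = (\<Sum>k\<in>{0..<m}. \<Sum>t<1. c (unit_vec m k) t * ((B ^\<^sub>m t) *\<^sub>v unit_vec m k) $ l)"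
        by (rule sum.reindex[OF inj_unit_vec, unfolded comp_def])
      also have "\<dots> = (\<Sum>k\<in>{0..<m}. if l = k then w $ k else 0)"
        using B l ix by (intro sum.cong) (auto simp: c_def)
      also have "\<dots> = w $ l" using l by simp
      finally show "w $ l = (\<Sum>g\<in>unit_vec m ` {0..<m}. \<Sum>k<1. c g k * ((B ^\<^sub>m k) *\<^sub>v g) $ l)" by simp
    qed
    then show "w \<in> zspan m B (unit_vec m ` {0..<m})" unfolding zspan_def using w by blast
  qed
qed

lemma offdiag_span:
  assumes B: "(B::'a::comm_ring_1 mat) \<in> carrier_mat m m" and ij: "i < m" "j < m" "i \<noteq> j"
    and v: "B $$ (i,j) * v = 1"
  shows "zspan m B (unit_vec m ` ({0..<m} - {i})) = carrier_vec m"
proof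
  show "zspan m B (unit_vec m ` ({0..<m} - {i})) \<subseteq> carrier_vec m" unfolding zspan_def by auto
next
  show "carrier_vec m \<subseteq> zspan m B (unit_vec m ` ({0..<m} - {i}))"
  proof
    fix w :: "'a vec" assume w: "w \<in> carrier_vec m"
    define ix where "ix = inv_into {0..<m} (unit_vec m :: nat \<Rightarrow> 'a vec)"
    have ix: "ix (unit_vec m k) = k" if "k < m" for k
      unfolding ix_def using inv_into_f_f[OF inj_unit_vec] that by simp
    have inj: "inj_on (unit_vec m :: nat \<Rightarrow> 'a vec) ({0..<m} - {i})"
      using inj_unit_vec by (rule inj_on_subset) auto
    define c where "c g (t::nat) = (if t = 0 then w $ ix g - w $ i * v * B $$ (ix g, j)
        else if ix g = j then w $ i * v else 0)" for g t
    have "\<forall>l<m. w $ l = (\<Sum>g\<in>unit_vec m ` ({0..<m} - {i}). \<Sum>k<2. c g k * ((B ^\<^sub>m k) *\<^sub>v g) $ l)"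
    proof (intro allI impI)
      fix l assume l: "l < m"
      have B1: "B ^\<^sub>m 1 = B" using B by simp
      have "(\<Sum>g\<in>unit_vec m ` ({0..<m} - {i}). \<Sum>k<2. c g k * ((B ^\<^sub>m k) *\<^sub>v g) $ l)
          = (\<Sum>k\<in>{0..<m} - {i}. \<Sum>t<2. c (unit_vec m k) t * ((B ^\<^sub>m t) *\<^sub>v unit_vec m k) $ l)"
        by (rule sum.reindex[OF inj, unfolded comp_def])
      also have "\<dots> = (\<Sum>k\<in>{0..<m} - {i}. (if l = k then w $ k - w $ i * v * B $$ (k, j) else 0)
            + (if k = j then w $ i * v * B $$ (l, j) else 0))"
      proof (intro sum.cong refl)
        fix k assume k: "k \<in> {0..<m} - {i}"
        have "(\<Sum>t<2. c (unit_vec m k) t * ((B ^\<^sub>m t) *\<^sub>v unit_vec m k) $ l)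
            = c (unit_vec m k) 0 * ((B ^\<^sub>m 0) *\<^sub>v unit_vec m k) $ l
              + c (unit_vec m k) 1 * ((B ^\<^sub>m 1) *\<^sub>v unit_vec m k) $ l"
          by (simp add: numeral_2_eq_2)
        also have "\<dots> = (if l = k then w $ k - w $ i * v * B $$ (k, j) else 0)
            + (if k = j then w $ i * v * B $$ (l, j) else 0)"
          using k l B ix unit_mult_vec[OF B, of k l] unfolding B1 by (auto simp: c_def)
        finally show "(\<Sum>t<2. c (unit_vec m k) t * ((B ^\<^sub>m t) *\<^sub>v unit_vec m k) $ l)
            = (if l = k then w $ k - w $ i * v * B $$ (k, j) else 0)
            + (if k = j then w $ i * v * B $$ (l, j) else 0)" .
      qed
      also have "\<dots> = (if l \<noteq> i then w $ l - w $ i * v * B $$ (l, j) else 0) + w $ i * v * B $$ (l, j)"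
        using l ij by (simp add: sum.distrib)
      also have "\<dots> = w $ l"
      proof (cases "l = i")
        case True
        have "w $ i * v * B $$ (i, j) = w $ i" using v by (metis mult.assoc mult.commute mult_1_right)
        then show ?thesis using True by simp
      next
        case False then show ?thesis by simp
      qed
      finally show "w $ l = (\<Sum>g\<in>unit_vec m ` ({0..<m} - {i}). \<Sum>k<2. c g k * ((B ^\<^sub>m k) *\<^sub>v g) $ l)" by simp
    qed
    then show "w \<in> zspan m B (unit_vec m ` ({0..<m} - {i}))" unfolding zspan_def using w by blast
  qed
qed

lemma mu_gen_le:
  assumes "finite G" "G \<subseteq> carrier_vec m" "zspan m B G = carrier_vec m"
  shows "mu_gen m B \<le> card G"
  unfolding mu_gen_def by (rule Least_le) (use assms in blast)

lemma mu_gen_full: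
  assumes loc: "local_ring TYPE('a::comm_ring_1)"
    and B: "(B::'a mat) \<in> carrier_mat m m"
    and e: "\<And>i j. i < m \<Longrightarrow> j < m \<Longrightarrow> B $$ (i,j) \<in> max_ideal"
  shows "mu_gen m B = m"
  unfolding mu_gen_def
proof (rule Least_equality)
  show "\<exists>G. finite G \<and> card G = m \<and> G \<subseteq> carrier_vec m \<and> zspan m B G = carrier_vec m"
    using std_span[OF B] card_image[OF inj_unit_vec, of m] by (intro exI[of _ "unit_vec m ` {0..<m}"]) auto
next
  fix y assume "\<exists>G. finite G \<and> card G = y \<and> G \<subseteq> carrier_vec m \<and> zspan m B G = carrier_vec m"
  then show "m \<le> y" using gen_lower[OF loc B e] by blast
qed

lemma mu_gen_small:
  assumes loc: "local_ring TYPE('a::comm_ring_1)"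
    and B: "(B::'a mat) \<in> carrier_mat m m" and ij: "i < m" "j < m" "i \<noteq> j"
    and u: "B $$ (i,j) \<notin> max_ideal"
  shows "mu_gen m B < m"
proof -
  obtain v where v: "B $$ (i,j) * v = 1" using unit_of_notin[OF loc u] by blast
  have inj: "inj_on (unit_vec m :: nat \<Rightarrow> 'a vec) ({0..<m} - {i})"
    using inj_unit_vec by (rule inj_on_subset) auto
  have "card (unit_vec m ` ({0..<m} - {i}) :: 'a vec set) = m - 1"
    using card_image[OF inj] ij by simp
  moreover have "mu_gen m B \<le> card (unit_vec m ` ({0..<m} - {i}) :: 'a vec set)"
    by (rule mu_gen_le) (use offdiag_span[OF B ij v] in auto)
  ultimately show ?thesis using ij by linarith
qed


lemma reduced_entries:
  assumes I: "is_ideal (max_ideal::'a::comm_ring_1 set)" and M: "(M::'a mat) \<in> carrier_mat m m"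
  shows "(\<forall>v\<in>carrier_vec m. M *\<^sub>v v \<in> max_ideal_vecs m) \<longleftrightarrow> (\<forall>a b. a < m \<longrightarrow> b < m \<longrightarrow> M $$ (a,b) \<in> max_ideal)"
proof
  assume h: "\<forall>v\<in>carrier_vec m. M *\<^sub>v v \<in> max_ideal_vecs m"
  show "\<forall>a b. a < m \<longrightarrow> b < m \<longrightarrow> M $$ (a,b) \<in> max_ideal"
  proof (intro allI impI)
    fix a b assume ab: "a < m" "b < m"
    have "M *\<^sub>v unit_vec m b \<in> max_ideal_vecs m" using h by simp
    then have "(M *\<^sub>v unit_vec m b) $ a \<in> max_ideal" using ab unfolding max_ideal_vecs_def by blast
    then show "M $$ (a,b) \<in> max_ideal" using unit_mult_vec[OF M ab(2,1)] by simp
  qed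
next
  assume h: "\<forall>a b. a < m \<longrightarrow> b < m \<longrightarrow> M $$ (a,b) \<in> max_ideal"
  show "\<forall>v\<in>carrier_vec m. M *\<^sub>v v \<in> max_ideal_vecs m"
  proof
    fix v :: "'a vec" assume v: "v \<in> carrier_vec m"
    have "(M *\<^sub>v v) $ a \<in> max_ideal" if "a < m" for a
      unfolding mult_vec_entry[OF M v that]
      by (intro ideal_sum[OF I] ideal_mult2[OF I]) (use h that in auto)
    then show "M *\<^sub>v v \<in> max_ideal_vecs m" unfolding max_ideal_vecs_def using M v mult_mat_vec_carrier[OF M v] by auto
  qed
qed

lemma pow_diag_cong:
  assumes I: "is_ideal (max_ideal::'a::comm_ring_1 set)" and A: "(A::'a mat) \<in> carrier_mat r r"
    and off: "\<And>i j. i < r \<Longrightarrow> j < r \<Longrightarrow> i \<noteq> j \<Longrightarrow> A $$ (i,j) \<in> max_ideal"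
  shows "(\<forall>i j. i < r \<longrightarrow> j < r \<longrightarrow> i \<noteq> j \<longrightarrow> (A ^\<^sub>m k) $$ (i,j) \<in> max_ideal) \<and>
         (\<forall>i. i < r \<longrightarrow> (A ^\<^sub>m k) $$ (i,i) - (A $$ (i,i)) ^ k \<in> max_ideal)"
proof (induction k)
  case 0
  show ?case using A ideal_zero[OF I] by auto
next
  case (Suc k)
  have Ak: "A ^\<^sub>m k \<in> carrier_mat r r" using A by simp
  have e: "(A ^\<^sub>m Suc k) $$ (i,j) = (\<Sum>l<r. (A ^\<^sub>m k) $$ (i,l) * A $$ (l,j))"
    if "i < r" "j < r" for i j
    using mult_entry[OF Ak A that] by simp
  show ?case
  proof (intro conjI allI impI)
    fix i j assume ij: "i < r" "j < r" "i \<noteq> j"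
    show "(A ^\<^sub>m Suc k) $$ (i,j) \<in> max_ideal"
      unfolding e[OF ij(1,2)]
    proof (intro ideal_sum[OF I])
      fix l assume "l \<in> {..<r}"
      then have l: "l < r" by simp
      show "(A ^\<^sub>m k) $$ (i,l) * A $$ (l,j) \<in> max_ideal"
      proof (cases "l = i")
        case True then show ?thesis using off ij ideal_mult[OF I] by simp
      next
        case False then show ?thesis using Suc ij l ideal_mult2[OF I] by simp
      qed
    qed
  next
    fix i assume i: "i < r"
    have s: "(\<Sum>l<r. (A ^\<^sub>m k) $$ (i,l) * A $$ (l,i))
        = (A ^\<^sub>m k) $$ (i,i) * A $$ (i,i) + (\<Sum>l\<in>{..<r} - {i}. (A ^\<^sub>m k) $$ (i,l) * A $$ (l,i))"
      using i by (simp add: sum.remove)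
    have t1: "(A ^\<^sub>m k) $$ (i,i) * A $$ (i,i) - (A $$ (i,i)) ^ Suc k
        = ((A ^\<^sub>m k) $$ (i,i) - (A $$ (i,i)) ^ k) * A $$ (i,i)"
      by (simp add: algebra_simps)
    have "((A ^\<^sub>m k) $$ (i,i) - (A $$ (i,i)) ^ k) * A $$ (i,i) \<in> max_ideal"
      using Suc i ideal_mult2[OF I] by blast
    moreover have "(\<Sum>l\<in>{..<r} - {i}. (A ^\<^sub>m k) $$ (i,l) * A $$ (l,i)) \<in> max_ideal"
      by (intro ideal_sum[OF I] ideal_mult2[OF I]) (use Suc i in auto)
    ultimately have "(A ^\<^sub>m k) $$ (i,i) * A $$ (i,i) - (A $$ (i,i)) ^ Suc k
        + (\<Sum>l\<in>{..<r} - {i}. (A ^\<^sub>m k) $$ (i,l) * A $$ (l,i)) \<in> max_ideal"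
      unfolding t1 using ideal_add[OF I] by blast
    then show "(A ^\<^sub>m Suc k) $$ (i,i) - (A $$ (i,i)) ^ Suc k \<in> max_ideal"
      unfolding e[OF i i] s by (simp add: algebra_simps)
  qed
qed

lemma offdiag_exists:
  assumes loc: "local_ring TYPE('a::comm_ring_1)" and A: "(A::'a mat) \<in> carrier_mat r r"
    and pw: "A ^\<^sub>m d = (- f) \<cdot>\<^sub>m 1\<^sub>m r" and f: "f \<in> max_ideal"
    and off: "\<And>i j. i < r \<Longrightarrow> j < r \<Longrightarrow> i \<noteq> j \<Longrightarrow> A $$ (i,j) \<in> max_ideal"
    and ij: "i < r" "j < r"
  shows "A $$ (i,j) \<in> max_ideal"
proof (cases "i = j")
  case False then show ?thesis using off ij by simp
next
  case True
  have I: "is_ideal (max_ideal::'a set)" using max_ideal_basic[OF loc] by simp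
  have "(A ^\<^sub>m d) $$ (i,i) - (A $$ (i,i)) ^ d \<in> max_ideal"
    using pow_diag_cong[OF I A off, of d] ij by blast
  moreover have "(A ^\<^sub>m d) $$ (i,i) = - f" using pw ij by simp
  moreover have "- f \<in> max_ideal" using ideal_uminus[OF I f] .
  ultimately have "- f - ((A ^\<^sub>m d) $$ (i,i) - (A $$ (i,i)) ^ d) \<in> max_ideal"
    using ideal_diff[OF I] by metis
  then have ad: "(A $$ (i,i)) ^ d \<in> max_ideal" using \<open>(A ^\<^sub>m d) $$ (i,i) = - f\<close> by simp
  show ?thesis
  proof (rule ccontr)
    assume "A $$ (i,j) \<notin> max_ideal"
    then obtain b where "A $$ (i,i) * b = 1" using unit_of_notin[OF loc] True by blast
    then have "(A $$ (i,i)) ^ d * b ^ d = 1" by (metis power_mult_distrib power_one)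
    then show False using unit_notin[OF loc] ad by blast
  qed
qed

lemma mu_gen_iff:
  assumes loc: "local_ring TYPE('a::comm_ring_1)" and B: "(B::'a mat) \<in> carrier_mat m m"
    and offd: "\<And>i j. i < m \<Longrightarrow> j < m \<Longrightarrow> B $$ (i,j) \<notin> max_ideal \<Longrightarrow> \<exists>i' j'. i' < m \<and> j' < m \<and> i' \<noteq> j' \<and> B $$ (i',j') \<notin> max_ideal"
  shows "mu_gen m B = m \<longleftrightarrow> (\<forall>i j. i < m \<longrightarrow> j < m \<longrightarrow> B $$ (i,j) \<in> max_ideal)"
proof
  assume h: "mu_gen m B = m"
  show "\<forall>i j. i < m \<longrightarrow> j < m \<longrightarrow> B $$ (i,j) \<in> max_ideal"
  proof (rule ccontr)
    assume "\<not> (\<forall>i j. i < m \<longrightarrow> j < m \<longrightarrow> B $$ (i,j) \<in> max_ideal)"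
    then obtain i j where "i < m" "j < m" "B $$ (i,j) \<notin> max_ideal" by blast
    then obtain i' j' where "i' < m" "j' < m" "i' \<noteq> j'" "B $$ (i',j') \<notin> max_ideal" using offd by blast
    then have "mu_gen m B < m" using mu_gen_small[OF loc B] by blast
    then show False using h by simp
  qed
next
  assume "\<forall>i j. i < m \<longrightarrow> j < m \<longrightarrow> B $$ (i,j) \<in> max_ideal"
  then show "mu_gen m B = m" using mu_gen_full[OF loc B] by blast
qed


lemma prod_set_sub:
  assumes I: "is_ideal I"
  shows "ideal_prod_set I J \<subseteq> I"
proof
  fix x assume "x \<in> ideal_prod_set I J"
  then obtain m :: nat and a b where ab: "\<forall>i<m. a i \<in> I \<and> b i \<in> J" "x = (\<Sum>i<m. a i * b i)"
    unfolding ideal_prod_set_def by blast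
  show "x \<in> I" unfolding ab(2) by (intro ideal_sum[OF I] ideal_mult2[OF I]) (use ab(1) in auto)
qed

lemma f_in_max:
  assumes I: "is_ideal (max_ideal::'a::comm_ring_1 set)" and f: "(f::'a) \<in> ideal_pow max_ideal 2"
  shows "f \<in> max_ideal"
proof -
  have "ideal_pow max_ideal 2 = ideal_prod_set max_ideal (ideal_pow (max_ideal::'a set) 1)"
    by (simp add: numeral_2_eq_2 del: ideal_pow.simps) (subst ideal_pow.simps(2), rule refl)
  then show ?thesis using f prod_set_sub[OF I] by blast
qed

lemma sharp_entry:
  assumes "i < d * n" "j < d * n"
  shows "sharp_mat d mu n phi $$ (i,j) =
    (if i div n = 0 \<and> j div n = d - 1 then (THE nu. mu * nu = 1) * (phi d $$ (i mod n, j mod n))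
     else if i div n \<ge> 1 \<and> j div n = i div n - 1 then (THE nu. mu * nu = 1) * (phi (d - i div n) $$ (i mod n, j mod n))
     else 0)"
  using assms unfolding sharp_mat_def by (simp add: Let_def)

lemma sharp_diag:
  assumes "d \<ge> 2" "i < d * n"
  shows "sharp_mat d mu n phi $$ (i,i) = 0"
proof -
  have "\<not> (i div n = 0 \<and> i div n = d - 1)" "\<not> (i div n \<ge> 1 \<and> i div n = i div n - 1)"
    using assms(1) by auto
  then show ?thesis unfolding sharp_entry[OF assms(2) assms(2)] by metis
qed

lemma sharp_entries_iff:
  assumes loc: "local_ring TYPE('a::comm_ring_1)" and d: "d \<ge> 2" and nu: "(mu::'a) * nu = 1"
    and the: "(THE nu. mu * nu = 1) = nu"
  shows "(\<forall>i j. i < d * n \<longrightarrow> j < d * n \<longrightarrow> sharp_mat d mu n phi $$ (i,j) \<in> max_ideal)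
     \<longleftrightarrow> (\<forall>k\<in>{1..d}. \<forall>a b. a < n \<longrightarrow> b < n \<longrightarrow> phi k $$ (a,b) \<in> max_ideal)"
proof -
  have I: "is_ideal (max_ideal::'a set)" using max_ideal_basic[OF loc] by simp
  have nu': "nu * mu = 1" using nu by (simp add: mult.commute)
  show ?thesis
  proof
    assume h: "\<forall>i j. i < d * n \<longrightarrow> j < d * n \<longrightarrow> sharp_mat d mu n phi $$ (i,j) \<in> max_ideal"
    show "\<forall>k\<in>{1..d}. \<forall>a b. a < n \<longrightarrow> b < n \<longrightarrow> phi k $$ (a,b) \<in> max_ideal"
    proof (intro ballI allI impI)
      fix k a b assume k: "k \<in> {1..d}" and ab: "a < n" "b < n"
      show "phi k $$ (a,b) \<in> max_ideal"
      proof (cases "k = d")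
        case True
        define j where "j = (d - 1) * n + b"
        have dn: "(d - 1) * n + n = d * n" using d by (cases d) auto
        have jl: "j < d * n" unfolding j_def using ab dn by linarith
        have "n \<le> d * n" using d by simp
        then have al: "a < d * n" using ab by linarith
        have "j div n = d - 1" "j mod n = b" unfolding j_def using ab by auto
        moreover have "a div n = 0" "a mod n = a" using ab by auto
        ultimately have "sharp_mat d mu n phi $$ (a,j) = nu * phi d $$ (a,b)"
          using sharp_entry[OF al jl, of mu phi] the by simp
        then have "nu * phi d $$ (a,b) \<in> max_ideal" using h al jl by metis
        then show ?thesis using unit_mult_in[OF loc nu'] True by simp
      next
        case False
        define bi where "bi = d - k"
        have bi: "1 \<le> bi" "bi < d" "d - bi = k" using k False unfolding bi_def by auto
        define i where "i = bi * n + a"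
        define j where "j = (bi - 1) * n + b"
        have il: "i < d * n"
        proof -
          have "i < bi * n + n" unfolding i_def using ab by simp
          also have "\<dots> = Suc bi * n" by simp
          also have "\<dots> \<le> d * n" using bi by (intro mult_le_mono1) simp
          finally show ?thesis .
        qed
        have jl: "j < d * n"
        proof -
          have "j < (bi - 1) * n + n" unfolding j_def using ab by simp
          also have "\<dots> = bi * n" using bi by (cases bi) auto
          also have "\<dots> \<le> d * n" using bi by (intro mult_le_mono1) simp
          finally show ?thesis .
        qed
        have "i div n = bi" "i mod n = a" "j div n = bi - 1" "j mod n = b"
          unfolding i_def j_def using ab by auto
        then have "sharp_mat d mu n phi $$ (i,j) = nu * phi k $$ (a,b)"
          using sharp_entry[OF il jl, of mu phi] the bi by simp
        then have "nu * phi k $$ (a,b) \<in> max_ideal" using h il jl by metis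
        then show ?thesis using unit_mult_in[OF loc nu'] by simp
      qed
    qed
  next
    assume h: "\<forall>k\<in>{1..d}. \<forall>a b. a < n \<longrightarrow> b < n \<longrightarrow> phi k $$ (a,b) \<in> max_ideal"
    show "\<forall>i j. i < d * n \<longrightarrow> j < d * n \<longrightarrow> sharp_mat d mu n phi $$ (i,j) \<in> max_ideal"
    proof (intro allI impI)
      fix i j assume ij: "i < d * n" "j < d * n"
      then have n0: "n > 0" by (cases "n = 0") auto
      have lt: "i mod n < n" "j mod n < n" using n0 by auto
      have idl: "i div n < d" using ij(1) by (simp add: less_mult_imp_div_less)
      have A1: "phi d $$ (i mod n, j mod n) \<in> max_ideal" using h lt d by auto
      have A2: "i div n \<ge> 1 \<Longrightarrow> phi (d - i div n) $$ (i mod n, j mod n) \<in> max_ideal"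
        using h lt idl by auto
      show "sharp_mat d mu n phi $$ (i,j) \<in> max_ideal"
        unfolding sharp_entry[OF ij] the
        using A1 A2 ideal_mult[OF I] ideal_zero[OF I] by auto
    qed
  qed
qed

theorem lemma5p7:
  fixes d :: nat and f mu :: "'a::comm_ring_1"
    and r :: nat and A :: "'a mat" and n :: nat and phi :: "nat \<Rightarrow> 'a mat"
  assumes "d \<ge> 2"
    and "regular_local_ring TYPE('a)" and "complete_local_ring TYPE('a)"
    and "residue_field_alg_closed TYPE('a)"
    and "(of_nat d :: 'a) \<notin> max_ideal"
    and "f \<noteq> 0" and "f \<in> ideal_pow max_ideal 2"
    and "irreducible (fps_const f + fps_X ^ d)"
    and "mu ^ d = -1"
    and "A \<in> carrier_mat r r" and "A ^\<^sub>m d = (- f) \<cdot>\<^sub>m 1\<^sub>m r"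
    and "is_mf d f n phi"
  shows "(mu_gen r A = r \<longleftrightarrow> reduced_mf d r (flat_mf mu A))
       \<and> (mu_gen (d * n) (sharp_mat d mu n phi) = d * n \<longleftrightarrow> reduced_mf d n phi)"
proof -
  have loc: "local_ring TYPE('a)" using assms(2) unfolding regular_local_ring_def by simp
  have I: "is_ideal (max_ideal::'a set)" using max_ideal_basic[OF loc] by simp
  have fI: "f \<in> max_ideal" using f_in_max[OF I assms(7)] .
  define nu where "nu = - (mu ^ (d - 1))"
  have nu: "mu * nu = 1"
  proof -
    have "mu * mu ^ (d - 1) = mu ^ d" using assms(1) by (metis Suc_diff_1 less_le_trans pos2 power_Suc)
    then show ?thesis unfolding nu_def using assms(9) by simp
  qed
  have nu': "nu * mu = 1" using nu by (simp add: mult.commute)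
  have the: "(THE nu. mu * nu = 1) = nu"
  proof (rule the_equality)
    show "mu * nu = 1" by (rule nu)
  next
    fix x assume "mu * x = 1"
    then have "nu * (mu * x) = nu" by simp
    then show "x = nu" using nu' by (simp add: mult.assoc[symmetric])
  qed
  have A: "A \<in> carrier_mat r r" by (rule assms(10))
  have part1: "mu_gen r A = r \<longleftrightarrow> reduced_mf d r (flat_mf mu A)"
  proof -
    have "mu_gen r A = r \<longleftrightarrow> (\<forall>i j. i < r \<longrightarrow> j < r \<longrightarrow> A $$ (i,j) \<in> max_ideal)"
    proof (rule mu_gen_iff[OF loc A])
      fix i j assume ij: "i < r" "j < r" "A $$ (i,j) \<notin> max_ideal"
      show "\<exists>i' j'. i' < r \<and> j' < r \<and> i' \<noteq> j' \<and> A $$ (i',j') \<notin> max_ideal"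
        using offdiag_exists[OF loc A assms(11) fI _ ij(1,2)] ij(3) by blast
    qed
    also have "\<dots> \<longleftrightarrow> (\<forall>i j. i < r \<longrightarrow> j < r \<longrightarrow> (mu \<cdot>\<^sub>m A) $$ (i,j) \<in> max_ideal)"
      using A unit_mult_in[OF loc nu] by auto
    also have "\<dots> \<longleftrightarrow> (\<forall>v\<in>carrier_vec r. (mu \<cdot>\<^sub>m A) *\<^sub>v v \<in> max_ideal_vecs r)"
      using reduced_entries[OF I, of "mu \<cdot>\<^sub>m A" r] A by simp
    also have "\<dots> \<longleftrightarrow> reduced_mf d r (flat_mf mu A)"
      unfolding reduced_mf_def flat_mf_def using assms(1) by auto
    finally show ?thesis .
  qed
  have S: "sharp_mat d mu n phi \<in> carrier_mat (d * n) (d * n)" unfolding sharp_mat_def by simp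
  have phic: "phi k \<in> carrier_mat n n" if "k \<in> {1..d}" for k
    using assms(12) that unfolding is_mf_def by blast
  have part2: "mu_gen (d * n) (sharp_mat d mu n phi) = d * n \<longleftrightarrow> reduced_mf d n phi"
  proof -
    have "mu_gen (d * n) (sharp_mat d mu n phi) = d * n \<longleftrightarrow>
        (\<forall>i j. i < d * n \<longrightarrow> j < d * n \<longrightarrow> sharp_mat d mu n phi $$ (i,j) \<in> max_ideal)"
    proof (rule mu_gen_iff[OF loc S])
      fix i j assume ij: "i < d * n" "j < d * n" "sharp_mat d mu n phi $$ (i,j) \<notin> max_ideal"
      have "i \<noteq> j" using ij sharp_diag[OF assms(1), of i n mu phi] ideal_zero[OF I] by auto
      then show "\<exists>i' j'. i' < d * n \<and> j' < d * n \<and> i' \<noteq> j' \<and> sharp_mat d mu n phi $$ (i',j') \<notin> max_ideal"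
        using ij by blast
    qed
    also have "\<dots> \<longleftrightarrow> (\<forall>k\<in>{1..d}. \<forall>a b. a < n \<longrightarrow> b < n \<longrightarrow> phi k $$ (a,b) \<in> max_ideal)"
      by (rule sharp_entries_iff[OF loc assms(1) nu the])
    also have "\<dots> \<longleftrightarrow> reduced_mf d n phi"
      unfolding reduced_mf_def using reduced_entries[OF I phic] by auto
    finally show ?thesis .
  qed
  show ?thesis using part1 part2 by simp
qed

end
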